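(* (i) $L(u)Q_1(u)=0$, i.e. writing $L(u)=\sum_{j=0}^N c_j(u)D^j$, one has $\sum_{j=0}^Nc_j(u)Q_1(u+j)=0$ for all $u\in\mathbb C$. (ii) For every $1\le a\le n$, $S_a\cdot L(u)=0$, i.e. $S_a\cdot c_j(u)=0$ in $\mathcal S$ for all $j$ and $u$.
   Context: Fix an integer $n\ge 2$ and put $N=2n+2$. Let $Q_a(u)$ ($1\le a\le n$, $u\in\mathbb C$) be algebraically independent commuting indeterminates, $\mathcal Q=\mathbb Z[Q_a(u)^{\pm1}]_{1\le a\le n,\,u\in\mathbb C}$, and $\mathcal K$ its field of fractions. Put $d_a=1+\delta_{an}$, $Y_a(u)=Q_a(u-\frac{d_a}{2})/Q_a(u+\frac{d_a}{2})$ for $1\le a\le n$, $Y_0(u)=1$, and $\mathcal Y=\mathbb Z[Y_a(u)^{\pm1}]_{1\le a\le n,\,u\in\mathbb C}\subset\mathcal Q$. For $1\le a\le n$ set $z_a(u)=\frac{Y_a(u+\frac a2)}{Y_{a-1}(u+\frac{a+1}2)}$, $z_{\bar a}(u)=\frac{Y_{a-1}(u+\frac{2n-a+3}2)}{Y_a(u+\frac{2n-a+4}2)}$; set $x_a(u)=z_a(u)$, $x_{2n+3-a}(u)=z_{\bar a}(u)$ for $1\le a\le n$, and $x_{n+1}(u)=-x_{n+2}(u)=\frac{Q_n(u+\frac n2)Q_n(u+\frac{n+4}2)}{Q_n(u+\frac{n+2}2)^2}$. $D$ is the shift operator: difference operators are expressions $\sum_j c_j(u)D^j$ with $c_j(u)\in\mathcal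 K$, multiplied using $D\,c(u)=c(u+1)\,D$. Define $L(u)=(x_1(u+n)-D)(x_2(u+n-1)-D)\cdots(x_N(u+n+1-N)-D)$; its coefficients lie in $\mathcal Y$. Screening operators: let $(\alpha_a|\alpha_a)=d_a$, $(\alpha_a|\alpha_{a+1})=(\alpha_{a+1}|\alpha_a)=-\frac12$ for $1\le a\le n-2$, $(\alpha_{n-1}|\alpha_n)=(\alpha_n|\alpha_{n-1})=-1$, and $(\alpha_a|\alpha_b)=0$ if $|a-b|\ge2$. Let $A_a(u)=\prod_{b=1}^n\frac{Q_b(u-(\alpha_a|\alpha_b))}{Q_b(u+(\alpha_a|\alpha_b))}$. Let $\mathcal S$ be the commutative ring generated over $\mathcal Q$ by symbols $S_a(u)$ ($1\le a\le n$, $u\in\mathbb C$) subject to $S_a(u+d_a)=A_a(u+\frac{d_a}2)S_a(u)$. The screening operator $S_a:\mathcal Y\to\mathcal S$ is the additive map obeying the Leibniz rule and $S_a\cdot Y_b(u)=\delta_{ab}Y_b(u)S_b(u)$ (hence $S_a\cdot Y_b(u)^{-1}=-\delta_{ab}Y_b(u)^{-1}S_b(u)$); on difference operators it acts coefficientwise: $S_a\cdot\sum_jc_j(u)D^j=\sum_j(S_a\cdot c_j(u))D^j$. *)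

theory Defs
  imports Complex_Main "HOL-Library.Poly_Mapping"
begin

text \<open>The ring Q = Z[Q_a(u)^{+-1}] as the group ring over Z of the free abelian group
  on the symbols (a,u): Laurent polynomials in algebraically independent indeterminates.\<close>
type_synonym qring = "((nat \<times> complex) \<Rightarrow>\<^sub>0 int) \<Rightarrow>\<^sub>0 int"

definition Qv :: "nat \<Rightarrow> complex \<Rightarrow> qring" where
  "Qv b u = Poly_Mapping.single (Poly_Mapping.single (b, u) 1) 1"

definition Qinv :: "nat \<Rightarrow> complex \<Rightarrow> qring" where
  "Qinv b u = Poly_Mapping.single (Poly_Mapping.single (b, u) (-1)) 1"

definition dd :: "nat \<Rightarrow> nat \<Rightarrow> complex" where
  "dd n a = (if a = n then 2 else 1)"

definition Yv :: "nat \<Rightarrow> nat \<Rightarrow> complex \<Rightarrow> qring" where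
  "Yv n a u = (if a = 0 then 1 else Qv a (u - dd n a / 2) * Qinv a (u + dd n a / 2))"

definition Yinv :: "nat \<Rightarrow> nat \<Rightarrow> complex \<Rightarrow> qring" where
  "Yinv n a u = (if a = 0 then 1 else Qinv a (u - dd n a / 2) * Qv a (u + dd n a / 2))"

definition zv :: "nat \<Rightarrow> nat \<Rightarrow> complex \<Rightarrow> qring" where
  "zv n a u = Yv n a (u + of_nat a / 2) * Yinv n (a - 1) (u + (of_nat a + 1) / 2)"

definition zbar :: "nat \<Rightarrow> nat \<Rightarrow> complex \<Rightarrow> qring" where
  "zbar n a u = Yv n (a - 1) (u + (2 * of_nat n - of_nat a + 3) / 2)
              * Yinv n a (u + (2 * of_nat n - of_nat a + 4) / 2)"

definition xv :: "nat \<Rightarrow> nat \<Rightarrow> complex \<Rightarrow> qring" where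
  "xv n i u =
    (if 1 \<le> i \<and> i \<le> n then zv n i u
     else if i = n + 1 then Qv n (u + of_nat n / 2) * Qv n (u + (of_nat n + 4) / 2)
                           * Qinv n (u + (of_nat n + 2) / 2) * Qinv n (u + (of_nat n + 2) / 2)
     else if i = n + 2 then - (Qv n (u + of_nat n / 2) * Qv n (u + (of_nat n + 4) / 2)
                           * Qinv n (u + (of_nat n + 2) / 2) * Qinv n (u + (of_nat n + 2) / 2))
     else if n + 3 \<le> i \<and> i \<le> 2 * n + 2 then zbar n (2 * n + 3 - i) u
     else 0)"

text \<open>Difference operators sum_j c_j(u) D^j, represented by their coefficient functions
  j \<mapsto> (u \<mapsto> c_j(u)), with product rule D c(u) = c(u+1) D.\<close>
type_synonym 'a dop = "nat \<Rightarrow> complex \<Rightarrow> 'a"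

definition dop_one :: "'a::comm_ring_1 dop" where
  "dop_one j u = (if j = 0 then 1 else 0)"

definition dop_mult :: "'a::comm_ring_1 dop \<Rightarrow> 'a dop \<Rightarrow> 'a dop" where
  "dop_mult P R j u = (\<Sum>i\<le>j. P i u * R (j - i) (u + of_nat i))"

definition dop_lin :: "(complex \<Rightarrow> 'a::comm_ring_1) \<Rightarrow> 'a dop" where
  "dop_lin f j u = (if j = 0 then f u else if j = 1 then -1 else 0)"

text \<open>L(u) = (x_1(u+n) - D)(x_2(u+n-1) - D) ... (x_N(u+n+1-N) - D); Lc n j u = c_j(u).\<close>
definition Lc :: "nat \<Rightarrow> qring dop" where
  "Lc n = foldr dop_mult
     (map (\<lambda>i. dop_lin (\<lambda>u. xv n i (u + of_nat n + 1 - of_nat i))) [1..<2 * n + 3]) dop_one"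

definition cform :: "nat \<Rightarrow> nat \<Rightarrow> nat \<Rightarrow> complex" where
  "cform n a b =
    (if a = b then dd n a
     else if (a = n - 1 \<and> b = n) \<or> (a = n \<and> b = n - 1) then -1
     else if a + 1 = b \<or> b + 1 = a then -1/2
     else 0)"

definition Av :: "nat \<Rightarrow> nat \<Rightarrow> complex \<Rightarrow> qring" where
  "Av n a u = (\<Prod>b\<in>{1..n}. Qv b (u - cform n a b) * Qinv b (u + cform n a b))"

inductive_set Yring :: "nat \<Rightarrow> qring set" for n :: nat where
  Y_gen: "1 \<le> b \<Longrightarrow> b \<le> n \<Longrightarrow> Yv n b u \<in> Yring n"
| Yinv_gen: "1 \<le> b \<Longrightarrow> b \<le> n \<Longrightarrow> Yinv n b u \<in> Yring n"
| one: "1 \<in> Yring n"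
| add: "x \<in> Yring n \<Longrightarrow> y \<in> Yring n \<Longrightarrow> x + y \<in> Yring n"
| neg: "x \<in> Yring n \<Longrightarrow> - x \<in> Yring n"
| mult: "x \<in> Yring n \<Longrightarrow> y \<in> Yring n \<Longrightarrow> x * y \<in> Yring n"

definition is_ring_hom :: "('a::comm_ring_1 \<Rightarrow> 'b::comm_ring_1) \<Rightarrow> bool" where
  "is_ring_hom \<phi> \<longleftrightarrow> \<phi> 1 = 1 \<and> (\<forall>x y. \<phi> (x + y) = \<phi> x + \<phi> y) \<and> (\<forall>x y. \<phi> (x * y) = \<phi> x * \<phi> y)"

text \<open>Images sigma(u) of the symbols S_a(u) in a Q-algebra (via phi) satisfying the defining
  relations S_a(u + d_a) = A_a(u + d_a/2) S_a(u).\<close>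
definition screening_symbols :: "nat \<Rightarrow> nat \<Rightarrow> (qring \<Rightarrow> 'r::comm_ring_1) \<Rightarrow> (complex \<Rightarrow> 'r) \<Rightarrow> bool" where
  "screening_symbols n a \<phi> \<sigma> \<longleftrightarrow> (\<forall>u. \<sigma> (u + dd n a) = \<phi> (Av n a (u + dd n a / 2)) * \<sigma> u)"

text \<open>Der is (on Y) the screening operator S_a composed with the map into the target:
  additive, Leibniz, and S_a . Y_b(u) = delta_ab Y_b(u) S_b(u).\<close>
definition screening_der :: "nat \<Rightarrow> nat \<Rightarrow> (qring \<Rightarrow> 'r::comm_ring_1) \<Rightarrow> (complex \<Rightarrow> 'r) \<Rightarrow> (qring \<Rightarrow> 'r) \<Rightarrow> bool" where
  "screening_der n a \<phi> \<sigma> Der \<longleftrightarrow>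
     (\<forall>x\<in>Yring n. \<forall>y\<in>Yring n. Der (x + y) = Der x + Der y) \<and>
     (\<forall>x\<in>Yring n. \<forall>y\<in>Yring n. Der (x * y) = \<phi> x * Der y + \<phi> y * Der x) \<and>
     (\<forall>b u. 1 \<le> b \<and> b \<le> n \<longrightarrow> Der (Yv n b u) = (if b = a then \<phi> (Yv n b u) * \<sigma> u else 0))"

end

theory Submission
  imports Defs
begin


lemma dop_mult_one_right: "dop_mult P dop_one = P"
proof (intro ext)
  fix j u
  have "dop_mult P dop_one j u = (\<Sum>i\<le>j. if i = j then P i u else 0)"
    unfolding dop_mult_def dop_one_def by (intro sum.cong) auto
  also have "\<dots> = P j u" by simp
  finally show "dop_mult P dop_one j u = P j u" .
qed

lemma dop_mult_one_left: "dop_mult dop_one P = P"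
proof (intro ext)
  fix j u
  have "dop_mult dop_one P j u = (\<Sum>i\<le>j. if i = 0 then P j u else 0)"
    unfolding dop_mult_def dop_one_def by (intro sum.cong) auto
  also have "\<dots> = P j u" by simp
  finally show "dop_mult dop_one P j u = P j u" .
qed

lemma dop_mult_lin_left:
  "dop_mult (dop_lin f) P j u = f u * P j u - (if j = 0 then 0 else P (j - 1) (u + 1))"
proof (cases j)
  case 0 then show ?thesis by (simp add: dop_mult_def dop_lin_def)
next
  case (Suc k)
  have "dop_mult (dop_lin f) P j u =
     (\<Sum>i\<le>j. (if i = 0 then f u * P j u else 0) + (if i = 1 then - P (j - 1) (u + 1) else 0))"
    unfolding dop_mult_def dop_lin_def by (intro sum.cong) auto
  also have "\<dots> = f u * P j u - P (j - 1) (u + 1)"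
    using Suc by (simp add: sum.distrib)
  finally show ?thesis using Suc by simp
qed

lemma dop_mult_lin_right:
  "dop_mult P (dop_lin g) j u = P j u * g (u + of_nat j) - (if j = 0 then 0 else P (j - 1) u)"
proof (cases j)
  case 0 then show ?thesis by (simp add: dop_mult_def dop_lin_def)
next
  case (Suc k)
  have "dop_mult P (dop_lin g) j u =
     (\<Sum>i\<le>j. (if i = j then P j u * g (u + of_nat j) else 0) + (if i = k then - P k u else 0))"
    unfolding dop_mult_def dop_lin_def using Suc by (intro sum.cong) auto
  also have "\<dots> = P j u * g (u + of_nat j) - P k u"
    using Suc by (simp add: sum.distrib)
  finally show ?thesis using Suc by simp
qed

lemma dop_mult_assoc: "dop_mult (dop_mult P R) S = dop_mult P (dop_mult R S)"
proof (intro ext)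
  fix j u
  define g where "g i k = P i u * R k (u + of_nat i) * S (j - i - k) (u + of_nat i + of_nat k)" for i k
  have "dop_mult P (dop_mult R S) j u = (\<Sum>i\<le>j. \<Sum>k\<le>j - i. g i k)"
    unfolding dop_mult_def g_def by (simp add: sum_distrib_left mult.assoc)
  also have "\<dots> = (\<Sum>(i,k)\<in>{(i,k). i + k \<le> j}. g i k)"
  proof -
    have "{(i,k). i + k \<le> j} = Sigma {..j} (\<lambda>i. {..j - i})" by auto
    then show ?thesis by (simp add: sum.Sigma)
  qed
  also have "\<dots> = (\<Sum>m\<le>j. \<Sum>i\<le>m. g i (m - i))"
    by (rule sum.triangle_reindex_eq)
  also have "\<dots> = dop_mult (dop_mult P R) S j u"
    unfolding dop_mult_def g_def sum_distrib_right
    by (intro sum.cong refl) (auto simp: of_nat_diff mult.assoc)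
  finally show "dop_mult (dop_mult P R) S j u = dop_mult P (dop_mult R S) j u" by simp
qed

lemma foldr_dop_append:
  "foldr dop_mult (xs @ ys) dop_one = dop_mult (foldr dop_mult xs dop_one) (foldr dop_mult ys dop_one)"
  by (induction xs) (simp_all add: dop_mult_one_left dop_mult_assoc)

lemma foldr_lin_deg:
  "j > length fs \<Longrightarrow> foldr dop_mult (map dop_lin fs) dop_one j u = 0"
proof (induction fs arbitrary: j u)
  case Nil then show ?case by (simp add: dop_one_def)
next
  case (Cons f fs)
  then show ?case by (simp add: dop_mult_lin_left)
qed


definition qmono :: "(nat \<times> complex \<Rightarrow>\<^sub>0 int) \<Rightarrow> qring" where
  "qmono M = Poly_Mapping.single M 1"

lemma qmono_mult: "qmono M * qmono M' = qmono (M + M')"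
  unfolding qmono_def by (simp add: mult_single)
lemma qmono_mult2: "qmono M * (qmono M' * r) = qmono (M + M') * r"
  by (simp add: qmono_mult mult.assoc[symmetric])
lemma Qv_mono: "Qv b x = qmono (Poly_Mapping.single (b,x) 1)"
  unfolding qmono_def Qv_def by simp
lemma Qinv_mono: "Qinv b x = qmono (- Poly_Mapping.single (b,x) 1)"
  unfolding qmono_def Qinv_def by (simp add: single_uminus)
lemma qmono_one: "1 = qmono 0"
  unfolding qmono_def by simp
lemma qmono_inj: "qmono M = qmono M' \<longleftrightarrow> M = M'"
proof
  assume "qmono M = qmono M'"
  then have "Poly_Mapping.lookup (Poly_Mapping.single M (1::int)) M = Poly_Mapping.lookup (Poly_Mapping.single M' 1) M"
    unfolding qmono_def by simp
  then show "M = M'" by (simp add: lookup_single when_def split: if_splits)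
qed simp
lemma qmono_neg_eq: "- qmono M = - qmono M' \<longleftrightarrow> M = M'"
  by (simp add: qmono_inj)

lemmas qsimps = Qv_mono Qinv_mono qmono_mult qmono_mult2 qmono_inj mult.assoc qmono_neg_eq

lemma QQinv: "Qv b x * Qinv b x = 1"
  by (simp add: qsimps qmono_one)

lemma Y_Yinv: "Yv n b x * Yinv n b x = 1"
  by (simp add: Yv_def Yinv_def qsimps qmono_one)

lemma cform_zero:
  assumes "1 \<le> n" "b \<noteq> a" "b + 1 \<noteq> a" "b \<noteq> a + 1"
  shows "cform n a b = 0"
  using assms unfolding cform_def by auto

lemma Av_expand:
  assumes "1 \<le> a" "a \<le> n"
  shows "Av n a x = (Qv a (x - dd n a) * Qinv a (x + dd n a)) *
     (if 2 \<le> a then Qv (a-1) (x - cform n a (a-1)) * Qinv (a-1) (x + cform n a (a-1)) else 1) *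
     (if a < n then Qv (a+1) (x - cform n a (a+1)) * Qinv (a+1) (x + cform n a (a+1)) else 1)"
proof -
  define h where "h b = Qv b (x - cform n a b) * Qinv b (x + cform n a b)" for b
  have hb: "h b = (if b = a then h a else 1) * (if b = a - 1 then h (a-1) else 1) * (if b = a + 1 then h (a+1) else 1)"
    if "b \<in> {1..n}" for b
  proof -
    consider "b = a" | "b = a - 1" | "b = a + 1" | "b \<noteq> a \<and> b + 1 \<noteq> a \<and> b \<noteq> a + 1"
      using assms by linarith
    then show ?thesis
    proof cases
      case 4
      then have "cform n a b = 0" using cform_zero[of n b a] that by auto
      then show ?thesis using 4 by (auto simp: h_def QQinv)
    qed (use that assms in auto)
  qed
  have "Av n a x = (\<Prod>b\<in>{1..n}. h b)" unfolding Av_def h_def by simp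
  also have "\<dots> = (\<Prod>b\<in>{1..n}. (if b = a then h a else 1) * (if b = a - 1 then h (a-1) else 1) * (if b = a + 1 then h (a+1) else 1))"
    using hb by (intro prod.cong) auto
  also have "\<dots> = h a * (if 2 \<le> a then h (a-1) else 1) * (if a < n then h (a+1) else 1)"
  proof -
    have m1: "(a \<in> {1..n}) = True" and m2: "(a - 1 \<in> {1..n}) = (2 \<le> a)" and m3: "(a + 1 \<in> {1..n}) = (a < n)"
      using assms by auto
    show ?thesis by (simp only: prod.distrib prod.delta finite_atLeastAtMost m1 m2 m3 if_True)
  qed
  finally show ?thesis unfolding h_def using assms by (simp add: cform_def)
qed


lemma IA:
  assumes "1 \<le> a" "a < n"
  shows "Yinv n (a-1) (X + 1/2) * Yv n a X = Yv n (a+1) (X + 1/2) * Yinv n a (X + 1) * Av n a (X + 1/2)"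
proof -
  have d1: "dd n a = 1" "dd n (a-1) = 1" using assms by (auto simp: dd_def)
  have c1: "2 \<le> a \<Longrightarrow> cform n a (a-1) = -1/2" using assms by (auto simp: cform_def)
  have c2: "cform n a (a+1) = (if a + 1 = n then -1 else -1/2)" using assms by (auto simp: cform_def)
  have d2: "dd n (a+1) = (if a + 1 = n then 2 else 1)" using assms by (auto simp: dd_def)
  have "a - 1 = 0 \<or> 2 \<le> a" by arith
  moreover have "a + 1 = n \<or> a + 1 \<noteq> n" by simp
  ultimately show ?thesis
    using assms d1 d2 c1 c2
    apply (elim disjE)
    apply (simp_all add: Av_expand Yv_def Yinv_def qsimps qmono_one)
    apply (simp_all add: add_ac)
    done
qed

lemma IZ:
  assumes "1 \<le> a" "a < n"
  shows "Yinv n (a+1) (W + 1/2) * Yv n a W = Yv n (a-1) (W + 1/2) * Yinv n a (W + 1) * Av n a (W + 1/2)"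
proof -
  have d1: "dd n a = 1" "dd n (a-1) = 1" using assms by (auto simp: dd_def)
  have c1: "2 \<le> a \<Longrightarrow> cform n a (a-1) = -1/2" using assms by (auto simp: cform_def)
  have c2: "cform n a (a+1) = (if a + 1 = n then -1 else -1/2)" using assms by (auto simp: cform_def)
  have d2: "dd n (a+1) = (if a + 1 = n then 2 else 1)" using assms by (auto simp: dd_def)
  have "a - 1 = 0 \<or> 2 \<le> a" by arith
  moreover have "a + 1 = n \<or> a + 1 \<noteq> n" by simp
  ultimately show ?thesis
    using assms d1 d2 c1 c2
    apply (elim disjE)
    apply (simp_all add: Av_expand Yv_def Yinv_def qsimps qmono_one)
    apply (simp_all add: add_ac)
    done
qed

lemma ddn: assumes "2 \<le> n" shows "dd n n = 2" "dd n (n-1) = 1" "cform n n (n-1) = -1" "n - 1 \<noteq> 0" "2 \<le> n"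
  using assms by (auto simp: dd_def cform_def)

lemma IB1:
  assumes "2 \<le> n"
  shows "Yinv n (n-1) (w + 3/2) * Yv n n w = Yv n (n-1) (w + 1/2) * Yinv n n (w + 2) * Av n n (w + 1)"
  using ddn[OF assms]
  apply (simp add: Av_expand Yv_def Yinv_def qsimps qmono_one)
  apply (simp add: add_ac)?
  done

lemma IB2:
  assumes "2 \<le> n"
  shows "Yinv n (n-1) (w + 3/2) * Yv n n (w+1) = Yv n (n-1) (w + 5/2) * Yinv n n (w + 3) * Av n n (w + 2)"
  using ddn[OF assms]
  apply (simp add: Av_expand Yv_def Yinv_def qsimps qmono_one)
  apply (simp add: add_ac)?
  done

lemma MID:
  assumes "2 \<le> n"
  shows "(Qv n w * Qv n (w+2) * Qinv n (w+1) * Qinv n (w+1)) * (-(Qv n (w-1) * Qv n (w+1) * Qinv n w * Qinv n w))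
     = -(Yv n n w * Yinv n n (w+1))"
  using ddn[OF assms]
  apply (simp add: Yv_def Yinv_def qsimps qmono_one)
  apply (simp add: add_ac)?
  done


lemma Yring_zero: "0 \<in> Yring n"
proof -
  have "1 + - 1 \<in> Yring n" by (intro Yring.add Yring.neg Yring.one)
  then show ?thesis by simp
qed

lemma Yring_diff: "x \<in> Yring n \<Longrightarrow> y \<in> Yring n \<Longrightarrow> x - y \<in> Yring n"
  using Yring.add[OF _ Yring.neg, of x n y] by simp

lemma Yv_in: "b \<le> n \<Longrightarrow> Yv n b x \<in> Yring n"
  using Yring.Y_gen[of b n x] by (cases "b = 0") (auto simp: Yv_def intro: Yring.one)

lemma Yinv_in: "b \<le> n \<Longrightarrow> Yinv n b x \<in> Yring n"
  using Yring.Yinv_gen[of b n x] by (cases "b = 0") (auto simp: Yinv_def intro: Yring.one)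

lemma Yring_sum: "(\<And>i. i \<in> A \<Longrightarrow> f i \<in> Yring n) \<Longrightarrow> sum f A \<in> Yring n"
  by (induction A rule: infinite_finite_induct) (auto intro: Yring_zero Yring.add)

locale scr =
  fixes n a :: nat and \<phi> :: "qring \<Rightarrow> 'r::comm_ring_1" and \<sigma> :: "complex \<Rightarrow> 'r" and Der :: "qring \<Rightarrow> 'r"
  assumes hom: "is_ring_hom \<phi>"
    and sym: "screening_symbols n a \<phi> \<sigma>"
    and der: "screening_der n a \<phi> \<sigma> Der"
    and a1: "1 \<le> a" and an: "a \<le> n" and n2: "2 \<le> n"
begin

lemma phi_one: "\<phi> 1 = 1" and phi_mult: "\<phi> (x * y) = \<phi> x * \<phi> y" and phi_add: "\<phi> (x + y) = \<phi> x + \<phi> y"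
  using hom unfolding is_ring_hom_def by auto

lemma Der_add: "x \<in> Yring n \<Longrightarrow> y \<in> Yring n \<Longrightarrow> Der (x + y) = Der x + Der y"
  using der unfolding screening_der_def by blast

lemma Der_mult: "x \<in> Yring n \<Longrightarrow> y \<in> Yring n \<Longrightarrow> Der (x * y) = \<phi> x * Der y + \<phi> y * Der x"
  using der unfolding screening_der_def by blast

lemma Der_Y_gen: "1 \<le> b \<Longrightarrow> b \<le> n \<Longrightarrow> Der (Yv n b u) = (if b = a then \<phi> (Yv n b u) * \<sigma> u else 0)"
  using der unfolding screening_der_def by blast

lemma Der_one: "Der 1 = 0"
proof -
  have "Der (1 * 1) = \<phi> 1 * Der 1 + \<phi> 1 * Der 1" by (rule Der_mult) (auto intro: Yring.one)
  then have "Der 1 = Der 1 + Der 1" by (simp add: phi_one)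
  then show ?thesis by simp
qed

lemma Der_zero: "Der 0 = 0"
proof -
  have "Der (0 + 0) = Der 0 + Der 0" by (rule Der_add) (auto intro: Yring_zero)
  then show ?thesis by simp
qed

lemma Der_neg: "x \<in> Yring n \<Longrightarrow> Der (- x) = - Der x"
proof -
  assume x: "x \<in> Yring n"
  have "Der (x + - x) = Der x + Der (- x)" by (rule Der_add) (auto intro: x Yring.neg)
  then show ?thesis by (simp add: Der_zero eq_neg_iff_add_eq_0 add.commute)
qed

lemma Der_diff: "x \<in> Yring n \<Longrightarrow> y \<in> Yring n \<Longrightarrow> Der (x - y) = Der x - Der y"
  using Der_add[of x "- y"] Der_neg[of y] Yring.neg[of y n] by simp

lemma Der_sum: "(\<And>i. i \<in> A \<Longrightarrow> f i \<in> Yring n) \<Longrightarrow> Der (sum f A) = (\<Sum>i\<in>A. Der (f i))"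
proof (induction A rule: infinite_finite_induct)
  case (insert x F)
  then show ?case by (simp add: Der_add Yring_sum)
qed (auto simp: Der_zero)

lemma Der_Yv: "b \<le> n \<Longrightarrow> Der (Yv n b u) = (if b = a then \<phi> (Yv n b u) * \<sigma> u else 0)"
  using Der_Y_gen[of b u] a1 by (cases "b = 0") (auto simp: Yv_def Der_one)

lemma phi_YYi: "\<phi> (Yinv n b x) * \<phi> (Yv n b x) = 1" "\<phi> (Yv n b x) * \<phi> (Yinv n b x) = 1"
  "\<phi> (Yinv n b x) * (\<phi> (Yv n b x) * r) = r" "\<phi> (Yv n b x) * (\<phi> (Yinv n b x) * r) = r"
proof -
  have e: "\<phi> (Yv n b x) * \<phi> (Yinv n b x) = 1"
    using Y_Yinv[of n b x] phi_one phi_mult[of "Yv n b x" "Yinv n b x"] by simp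
  then show "\<phi> (Yinv n b x) * \<phi> (Yv n b x) = 1" "\<phi> (Yv n b x) * \<phi> (Yinv n b x) = 1"
    "\<phi> (Yinv n b x) * (\<phi> (Yv n b x) * r) = r" "\<phi> (Yv n b x) * (\<phi> (Yinv n b x) * r) = r"
    by (simp_all add: mult.commute mult.left_commute)
qed

lemma Der_Yinv: "b \<le> n \<Longrightarrow> Der (Yinv n b u) = (if b = a then - (\<phi> (Yinv n b u) * \<sigma> u) else 0)"
proof -
  assume b: "b \<le> n"
  have "Der (Yv n b u * Yinv n b u) = \<phi> (Yv n b u) * Der (Yinv n b u) + \<phi> (Yinv n b u) * Der (Yv n b u)"
    by (rule Der_mult) (auto intro: Yv_in Yinv_in b)
  then have e: "0 = \<phi> (Yv n b u) * Der (Yinv n b u) + \<phi> (Yinv n b u) * Der (Yv n b u)"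
    by (simp add: Y_Yinv Der_one)
  have u: "\<phi> (Yinv n b u) * \<phi> (Yv n b u) = 1"
    using Y_Yinv[of n b u] by (simp add: phi_mult[symmetric] mult.commute phi_one)
  have "Der (Yinv n b u) = \<phi> (Yinv n b u) * (\<phi> (Yv n b u) * Der (Yinv n b u))"
    using u by (simp add: mult.assoc[symmetric])
  also have "\<dots> = \<phi> (Yinv n b u) * (- (\<phi> (Yinv n b u) * Der (Yv n b u)))"
  proof -
    have "\<phi> (Yv n b u) * Der (Yinv n b u) = - (\<phi> (Yinv n b u) * Der (Yv n b u))"
      using e[symmetric] by (simp add: eq_neg_iff_add_eq_0)
    then show ?thesis by simp
  qed
  also have "\<dots> = (if b = a then - (\<phi> (Yinv n b u) * \<sigma> u) else 0)"
    using u b by (cases "b = a") (simp_all add: Der_Yv phi_YYi)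
  finally show ?thesis .
qed

end

definition Fop :: "nat \<Rightarrow> nat \<Rightarrow> qring dop" where
  "Fop n i = dop_lin (\<lambda>u. xv n i (u + of_nat n + 1 - of_nat i))"

lemma Lc_Fop: "Lc n = foldr dop_mult (map (Fop n) [1..<2 * n + 3]) dop_one"
  unfolding Lc_def Fop_def by simp

lemma xv_zv: "1 \<le> i \<Longrightarrow> i \<le> n \<Longrightarrow> X1 = y + of_nat i / 2 \<Longrightarrow> X2 = y + (of_nat i + 1) / 2 \<Longrightarrow>
  i' = i - 1 \<Longrightarrow> xv n i y = Yv n i X1 * Yinv n i' X2"
  by (simp add: xv_def zv_def)

lemma xv_zbar: "n + 3 \<le> i \<Longrightarrow> i \<le> 2 * n + 2 \<Longrightarrow> b = 2 * n + 3 - i \<Longrightarrow>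
  X1 = y + (2 * of_nat n - of_nat b + 3) / 2 \<Longrightarrow> X2 = y + (2 * of_nat n - of_nat b + 4) / 2 \<Longrightarrow>
  b' = b - 1 \<Longrightarrow> xv n i y = Yv n b' X1 * Yinv n b X2"
  by (simp add: xv_def zbar_def)

lemma xv_mid1: "y0 = y + of_nat n / 2 \<Longrightarrow> y1 = y + (of_nat n + 2) / 2 \<Longrightarrow> y2 = y + (of_nat n + 4) / 2 \<Longrightarrow>
  xv n (n + 1) y = Qv n y0 * Qv n y2 * Qinv n y1 * Qinv n y1"
  by (simp add: xv_def)

lemma xv_mid2: "y0 = y + of_nat n / 2 \<Longrightarrow> y1 = y + (of_nat n + 2) / 2 \<Longrightarrow> y2 = y + (of_nat n + 4) / 2 \<Longrightarrow>
  xv n (n + 2) y = - (Qv n y0 * Qv n y2 * Qinv n y1 * Qinv n y1)"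
  by (simp add: xv_def)

lemma mult3_s: "(A::'r::comm_ring_1) * B = C * (D * E) \<Longrightarrow> A * (B * s) = C * (D * (E * s))"
  by (metis mult.assoc)

lemma pair_formula:
  "dop_mult (dop_lin f) (dop_mult (dop_lin g) dop_one) j u =
    (if j = 0 then f u * g u else if j = 1 then - f u - g (u + 1) else if j = 2 then 1 else 0)"
  apply (simp add: dop_mult_lin_left dop_mult_one_right dop_lin_def)
  apply arith
  done

context scr
begin

definition good :: "qring dop \<Rightarrow> bool" where
  "good P \<longleftrightarrow> (\<forall>j u. P j u \<in> Yring n \<and> Der (P j u) = 0)"

lemma good_one: "good dop_one"
  unfolding good_def dop_one_def by (auto simp: Der_one Der_zero intro: Yring.one Yring_zero)

lemma good_mult: assumes "good P" "good R" shows "good (dop_mult P R)"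
  unfolding good_def
proof (intro allI conjI)
  fix j u
  have m: "P i u * R (j - i) (u + of_nat i) \<in> Yring n" for i
    using assms unfolding good_def by (auto intro: Yring.mult)
  then show "dop_mult P R j u \<in> Yring n" unfolding dop_mult_def by (intro Yring_sum)
  show "Der (dop_mult P R j u) = 0"
    unfolding dop_mult_def using m assms by (simp add: Der_sum Der_mult good_def)
qed

lemma good_foldr: "(\<forall>x\<in>set xs. good x) \<Longrightarrow> good (foldr dop_mult xs dop_one)"
  by (induction xs) (auto intro: good_one good_mult)

lemma good_append: "good (foldr dop_mult xs dop_one) \<Longrightarrow> good (foldr dop_mult ys dop_one) \<Longrightarrow>
   good (foldr dop_mult (xs @ ys) dop_one)"
  by (simp only: foldr_dop_append) (rule good_mult)

lemma good_lin: "(\<And>u. f u \<in> Yring n \<and> Der (f u) = 0) \<Longrightarrow> good (dop_lin f)"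
  unfolding good_def dop_lin_def
  by (auto simp: Der_zero Der_neg[OF Yring.one] Der_one intro: Yring_zero Yring.neg Yring.one)

lemma good_pair:
  assumes "\<And>u. f u * g u \<in> Yring n \<and> Der (f u * g u) = 0"
    "\<And>u. - f u - g (u + 1) \<in> Yring n \<and> Der (- f u - g (u + 1)) = 0"
  shows "good (dop_mult (dop_lin f) (dop_mult (dop_lin g) dop_one))"
  unfolding good_def pair_formula using assms
  by (auto simp: Der_zero Der_one intro: Yring_zero Yring.one)

lemmas Yin = Yv_in Yinv_in Yring.mult Yring.add Yring.neg Yring_diff Yring.one Yring_zero

lemma sigma_step: "\<sigma> (x + dd n a) = \<phi> (Av n a (x + dd n a / 2)) * \<sigma> x"
  using sym unfolding screening_symbols_def by blast

lemma good_pairA: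
  assumes "a < n"
  shows "good (dop_mult (Fop n a) (dop_mult (Fop n (a + 1)) dop_one))"
  unfolding Fop_def
proof (rule good_pair)
  fix u :: complex
  define X where "X = u + of_nat n + 1 - of_nat a / 2"
  have f: "xv n a (u + of_nat n + 1 - of_nat a) = Yv n a X * Yinv n (a - 1) (X + 1/2)"
    by (rule xv_zv) (use a1 assms in \<open>auto simp: X_def field_simps\<close>)
  have g: "xv n (a + 1) (u + of_nat n + 1 - of_nat (a + 1)) = Yv n (a + 1) (X - 1/2) * Yinv n a X"
    by (rule xv_zv) (use a1 assms in \<open>auto simp: X_def field_simps\<close>)
  have g1: "xv n (a + 1) (u + 1 + of_nat n + 1 - of_nat (a + 1)) = Yv n (a + 1) (X + 1/2) * Yinv n a (X + 1)"
    by (rule xv_zv) (use a1 assms in \<open>auto simp: X_def field_simps\<close>)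
  have fg: "Yv n a X * Yinv n (a - 1) (X + 1/2) * (Yv n (a + 1) (X - 1/2) * Yinv n a X) =
     Yinv n (a - 1) (X + 1/2) * Yv n (a + 1) (X - 1/2)"
  proof -
    have "Yv n a X * Yinv n (a - 1) (X + 1/2) * (Yv n (a + 1) (X - 1/2) * Yinv n a X) =
       (Yv n a X * Yinv n a X) * (Yinv n (a - 1) (X + 1/2) * Yv n (a + 1) (X - 1/2))"
      by (simp add: ac_simps)
    then show ?thesis by (simp add: Y_Yinv)
  qed
  have an1: "a - 1 \<le> n" "a + 1 \<le> n" "a - 1 \<noteq> a" "a + 1 \<noteq> a" using a1 assms by auto
  show "xv n a (u + of_nat n + 1 - of_nat a) * xv n (a + 1) (u + of_nat n + 1 - of_nat (a + 1)) \<in> Yring n \<and>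
        Der (xv n a (u + of_nat n + 1 - of_nat a) * xv n (a + 1) (u + of_nat n + 1 - of_nat (a + 1))) = 0"
    unfolding f g fg using an1 by (simp add: Yin Der_mult Der_Yv Der_Yinv)
  have dd1: "dd n a = 1" using assms by (simp add: dd_def)
  have sg: "\<sigma> (X + 1) = \<phi> (Av n a (X + 1/2)) * \<sigma> X" using sigma_step[of X] dd1 by simp
  have key: "\<phi> (Yinv n (a - 1) (X + 1/2)) * (\<phi> (Yv n a X) * \<sigma> X) =
     \<phi> (Yv n (a + 1) (X + 1/2)) * (\<phi> (Yinv n a (X + 1)) * (\<phi> (Av n a (X + 1/2)) * \<sigma> X))"
    using arg_cong[OF IA[OF a1 assms, of X], of \<phi>] by (intro mult3_s) (simp add: phi_mult mult.assoc)
  show "- xv n a (u + of_nat n + 1 - of_nat a) - xv n (a + 1) (u + 1 + of_nat n + 1 - of_nat (a + 1)) \<in> Yring n \<and>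
        Der (- xv n a (u + of_nat n + 1 - of_nat a) - xv n (a + 1) (u + 1 + of_nat n + 1 - of_nat (a + 1))) = 0"
    unfolding f g1 using an1 a1 assms key by (simp add: Yin Der_mult Der_Yv Der_Yinv Der_neg Der_diff sg)
qed

end

definition mmf :: "nat \<Rightarrow> complex \<Rightarrow> qring" where
  "mmf n u = Yv n n (u + of_nat n / 2) * Yinv n n (u + of_nat n / 2 + 1)"

definition Mop :: "nat \<Rightarrow> qring dop" where
  "Mop n j u = (if j = 0 then - mmf n u else if j = 2 then 1 else 0)"

lemma mid_formula:
  assumes "2 \<le> n"
  shows "dop_mult (Fop n (n + 1)) (dop_mult (Fop n (n + 2)) dop_one) = Mop n"
proof (intro ext)
  fix j and u :: complex
  define w where "w = u + of_nat n / 2"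
  have f: "xv n (n + 1) (u + of_nat n + 1 - of_nat (n + 1)) = Qv n w * Qv n (w+2) * Qinv n (w+1) * Qinv n (w+1)"
    by (rule xv_mid1) (auto simp: w_def field_simps)
  have g: "xv n (n + 2) (u + of_nat n + 1 - of_nat (n + 2)) = - (Qv n (w-1) * Qv n (w+1) * Qinv n w * Qinv n w)"
    by (rule xv_mid2) (auto simp: w_def field_simps)
  have g1: "xv n (n + 2) (u + 1 + of_nat n + 1 - of_nat (n + 2)) = - (Qv n w * Qv n (w+2) * Qinv n (w+1) * Qinv n (w+1))"
    by (rule xv_mid2) (auto simp: w_def field_simps)
  show "dop_mult (Fop n (n + 1)) (dop_mult (Fop n (n + 2)) dop_one) j u = Mop n j u"
    unfolding Fop_def pair_formula f g g1 MID[OF assms]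
    by (simp add: Mop_def mmf_def w_def)
qed

lemma Mop_mult:
  "dop_mult (Mop n) P j u = - mmf n u * P j u + (if 2 \<le> j then P (j - 2) (u + 2) else 0)"
proof -
  have "dop_mult (Mop n) P j u = (\<Sum>i\<le>j. (if i = 0 then - mmf n u * P j u else 0)
      + (if i = 2 then P (j - 2) (u + 2) else 0))"
    unfolding dop_mult_def Mop_def by (intro sum.cong) auto
  also have "\<dots> = - mmf n u * P j u + (if 2 \<le> j then P (j - 2) (u + 2) else 0)"
    by (simp add: sum.distrib)
  finally show ?thesis .
qed

lemma block_formula:
  "dop_mult (dop_lin p) (dop_mult (Mop n) (dop_lin q)) j u =
   (if j = 0 then - (p u * (mmf n u * q u))
    else if j = 1 then p u * mmf n u + mmf n (u + 1) * q (u + 1)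
    else if j = 2 then p u * q (u + 2) - mmf n (u + 1)
    else if j = 3 then - p u - q (u + 3)
    else if j = 4 then 1 else 0)"
proof -
  consider "j = 0" | "j = 1" | "j = 2" | "j = 3" | "j = 4" | "j \<ge> 5" by arith
  then show ?thesis
    by cases (simp_all add: dop_mult_lin_left Mop_mult dop_lin_def add.assoc)
qed

lemma block4_eq:
  "foldr dop_mult [Fop n n, Fop n (n + 1), Fop n (n + 2), Fop n (n + 3)] dop_one =
   dop_mult (Fop n n) (dop_mult (Mop n) (Fop n (n + 3)))" if "2 \<le> n"
  using mid_formula[OF that]
  by (simp add: dop_mult_one_right dop_mult_assoc[symmetric])

context scr
begin

lemma good_pairZ:
  assumes "a < n"
  shows "good (dop_mult (Fop n (2 * n + 2 - a)) (dop_mult (Fop n (2 * n + 2 - a + 1)) dop_one))"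
  unfolding Fop_def
proof (rule good_pair)
  fix u :: complex
  define W where "W = u + of_nat a / 2"
  have oa: "of_nat (2 * n + 2 - a) = (2 * of_nat n + 2 - of_nat a :: complex)"
    "of_nat (2 * n + 2 - a + 1) = (2 * of_nat n + 3 - of_nat a :: complex)"
    using assms by (simp_all add: of_nat_diff)
  have f: "xv n (2 * n + 2 - a) (u + of_nat n + 1 - of_nat (2 * n + 2 - a)) = Yv n a W * Yinv n (a + 1) (W + 1/2)"
    by (rule xv_zbar) (use a1 assms in \<open>auto simp: W_def oa field_simps\<close>)
  have g: "xv n (2 * n + 2 - a + 1) (u + of_nat n + 1 - of_nat (2 * n + 2 - a + 1)) = Yv n (a - 1) (W - 1/2) * Yinv n a W"
    by (rule xv_zbar) (use a1 assms in \<open>auto simp: W_def oa of_nat_diff field_simps\<close>)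
  have g1: "xv n (2 * n + 2 - a + 1) (u + 1 + of_nat n + 1 - of_nat (2 * n + 2 - a + 1)) = Yv n (a - 1) (W + 1/2) * Yinv n a (W + 1)"
    by (rule xv_zbar) (use a1 assms in \<open>auto simp: W_def oa of_nat_diff field_simps\<close>)
  have fg: "Yv n a W * Yinv n (a + 1) (W + 1/2) * (Yv n (a - 1) (W - 1/2) * Yinv n a W) =
     Yinv n (a + 1) (W + 1/2) * Yv n (a - 1) (W - 1/2)"
  proof -
    have "Yv n a W * Yinv n (a + 1) (W + 1/2) * (Yv n (a - 1) (W - 1/2) * Yinv n a W) =
       (Yv n a W * Yinv n a W) * (Yinv n (a + 1) (W + 1/2) * Yv n (a - 1) (W - 1/2))"
      by (simp add: ac_simps)
    then show ?thesis by (simp add: Y_Yinv)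
  qed
  have an1: "a - 1 \<le> n" "a + 1 \<le> n" "a - 1 \<noteq> a" "a + 1 \<noteq> a" using a1 assms by auto
  show "xv n (2 * n + 2 - a) (u + of_nat n + 1 - of_nat (2 * n + 2 - a)) * xv n (2 * n + 2 - a + 1) (u + of_nat n + 1 - of_nat (2 * n + 2 - a + 1)) \<in> Yring n \<and>
        Der (xv n (2 * n + 2 - a) (u + of_nat n + 1 - of_nat (2 * n + 2 - a)) * xv n (2 * n + 2 - a + 1) (u + of_nat n + 1 - of_nat (2 * n + 2 - a + 1))) = 0"
    unfolding f g fg using an1 by (simp add: Yin Der_mult Der_Yv Der_Yinv)
  have dd1: "dd n a = 1" using assms by (simp add: dd_def)
  have sg: "\<sigma> (W + 1) = \<phi> (Av n a (W + 1/2)) * \<sigma> W" using sigma_step[of W] dd1 by simp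
  have key: "\<phi> (Yinv n (a + 1) (W + 1/2)) * (\<phi> (Yv n a W) * \<sigma> W) =
     \<phi> (Yv n (a - 1) (W + 1/2)) * (\<phi> (Yinv n a (W + 1)) * (\<phi> (Av n a (W + 1/2)) * \<sigma> W))"
    using arg_cong[OF IZ[OF a1 assms, of W], of \<phi>] by (intro mult3_s) (simp add: phi_mult mult.assoc)
  show "- xv n (2 * n + 2 - a) (u + of_nat n + 1 - of_nat (2 * n + 2 - a)) - xv n (2 * n + 2 - a + 1) (u + 1 + of_nat n + 1 - of_nat (2 * n + 2 - a + 1)) \<in> Yring n \<and>
        Der (- xv n (2 * n + 2 - a) (u + of_nat n + 1 - of_nat (2 * n + 2 - a)) - xv n (2 * n + 2 - a + 1) (u + 1 + of_nat n + 1 - of_nat (2 * n + 2 - a + 1))) = 0"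
    unfolding f g1 using an1 a1 assms key by (simp add: Yin Der_mult Der_Yv Der_Yinv Der_neg Der_diff sg)
qed

lemma good_mid:
  assumes "a < n"
  shows "good (dop_mult (Fop n (n + 1)) (dop_mult (Fop n (n + 2)) dop_one))"
  unfolding mid_formula[OF n2] good_def Mop_def mmf_def using assms
  by (auto simp: Yin Der_mult Der_Yv Der_Yinv Der_neg Der_zero Der_one)

end

context scr
begin

lemma good_block4:
  assumes "a = n"
  shows "good (foldr dop_mult [Fop n n, Fop n (n + 1), Fop n (n + 2), Fop n (n + 3)] dop_one)"
  unfolding block4_eq[OF n2] good_def
proof (intro allI)
  fix j and u :: complex
  define w where "w = u + of_nat n / 2"
  have nn: "n - 1 \<le> n" "n - 1 \<noteq> n" "1 \<le> n" using n2 by auto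
  have p: "xv n n (u + of_nat n + 1 - of_nat n) = Yv n n (w + 1) * Yinv n (n - 1) (w + 3/2)"
    by (rule xv_zv) (use n2 in \<open>auto simp: w_def field_simps\<close>)
  have q0: "xv n (n + 3) (u + of_nat n + 1 - of_nat (n + 3)) = Yv n (n - 1) (w - 1/2) * Yinv n n w"
    by (rule xv_zbar) (use n2 in \<open>auto simp: w_def field_simps\<close>)
  have q1: "xv n (n + 3) (u + 1 + of_nat n + 1 - of_nat (n + 3)) = Yv n (n - 1) (w + 1/2) * Yinv n n (w + 1)"
    by (rule xv_zbar) (use n2 in \<open>auto simp: w_def field_simps\<close>)
  have q2: "xv n (n + 3) (u + 2 + of_nat n + 1 - of_nat (n + 3)) = Yv n (n - 1) (w + 3/2) * Yinv n n (w + 2)"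
    by (rule xv_zbar) (use n2 in \<open>auto simp: w_def field_simps\<close>)
  have q3: "xv n (n + 3) (u + 3 + of_nat n + 1 - of_nat (n + 3)) = Yv n (n - 1) (w + 5/2) * Yinv n n (w + 3)"
    by (rule xv_zbar) (use n2 in \<open>auto simp: w_def field_simps\<close>)
  have m0: "mmf n u = Yv n n w * Yinv n n (w + 1)" by (simp add: mmf_def w_def)
  have m1: "mmf n (u + 1) = Yv n n (w + 1) * Yinv n n (w + 2)"
  proof -
    have e: "u + 1 + of_nat n / 2 = w + 1" "w + 1 + 1 = w + 2" by (simp_all add: w_def)
    show ?thesis unfolding mmf_def by (simp only: e)
  qed
  have B: "dop_mult (Fop n n) (dop_mult (Mop n) (Fop n (n + 3))) j u =
   (if j = 0 then - (Yv n n (w + 1) * Yinv n (n - 1) (w + 3/2) * (Yv n n w * Yinv n n (w + 1) * (Yv n (n - 1) (w - 1/2) * Yinv n n w)))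
    else if j = 1 then Yv n n (w + 1) * Yinv n (n - 1) (w + 3/2) * (Yv n n w * Yinv n n (w + 1))
       + Yv n n (w + 1) * Yinv n n (w + 2) * (Yv n (n - 1) (w + 1/2) * Yinv n n (w + 1))
    else if j = 2 then Yv n n (w + 1) * Yinv n (n - 1) (w + 3/2) * (Yv n (n - 1) (w + 3/2) * Yinv n n (w + 2))
       - Yv n n (w + 1) * Yinv n n (w + 2)
    else if j = 3 then - (Yv n n (w + 1) * Yinv n (n - 1) (w + 3/2)) - Yv n (n - 1) (w + 5/2) * Yinv n n (w + 3)
    else if j = 4 then 1 else 0)"
    unfolding Fop_def block_formula p q0 q1 q2 q3 m0 m1 ..
  have e0: "Yv n n (w + 1) * Yinv n (n - 1) (w + 3/2) * (Yv n n w * Yinv n n (w + 1) * (Yv n (n - 1) (w - 1/2) * Yinv n n w))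
     = Yinv n (n - 1) (w + 3/2) * Yv n (n - 1) (w - 1/2)"
    using ddn[OF n2]
    apply (simp add: Yv_def Yinv_def qsimps qmono_one)
    apply (simp add: add_ac)?
    done
  have e1a: "Yv n n (w + 1) * Yinv n (n - 1) (w + 3/2) * (Yv n n w * Yinv n n (w + 1)) = Yinv n (n - 1) (w + 3/2) * Yv n n w"
    using ddn[OF n2]
    apply (simp add: Yv_def Yinv_def qsimps qmono_one)
    apply (simp add: add_ac)?
    done
  have e1b: "Yv n n (w + 1) * Yinv n n (w + 2) * (Yv n (n - 1) (w + 1/2) * Yinv n n (w + 1)) = Yv n (n - 1) (w + 1/2) * Yinv n n (w + 2)"
    using ddn[OF n2]
    apply (simp add: Yv_def Yinv_def qsimps qmono_one)
    apply (simp add: add_ac)?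
    done
  have e2: "Yv n n (w + 1) * Yinv n (n - 1) (w + 3/2) * (Yv n (n - 1) (w + 3/2) * Yinv n n (w + 2)) = Yv n n (w + 1) * Yinv n n (w + 2)"
    using ddn[OF n2]
    apply (simp add: Yv_def Yinv_def qsimps qmono_one)
    apply (simp add: add_ac)?
    done
  have dd2: "dd n a = 2" using assms by (simp add: dd_def)
  have sg1: "\<sigma> (w + 2) = \<phi> (Av n n (w + 1)) * \<sigma> w" using sigma_step[of w] dd2 assms by simp
  have sg2: "\<sigma> (w + 3) = \<phi> (Av n n (w + 2)) * \<sigma> (w + 1)"
  proof -
    have e: "w + 1 + 2 = w + 3" "w + 1 + 2 / 2 = w + 2" by simp_all
    have "\<sigma> (w + 1 + dd n a) = \<phi> (Av n a (w + 1 + dd n a / 2)) * \<sigma> (w + 1)" by (rule sigma_step)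
    then have "\<sigma> (w + 1 + 2) = \<phi> (Av n a (w + 1 + 2 / 2)) * \<sigma> (w + 1)" by (simp only: dd2)
    then show ?thesis by (simp only: e assms)
  qed
  have key1: "\<phi> (Yinv n (n - 1) (w + 3/2)) * (\<phi> (Yv n n w) * \<sigma> w) =
     \<phi> (Yv n (n - 1) (w + 1/2)) * (\<phi> (Yinv n n (w + 2)) * (\<phi> (Av n n (w + 1)) * \<sigma> w))"
    using arg_cong[OF IB1[OF n2, of w], of \<phi>] by (intro mult3_s) (simp add: phi_mult mult.assoc)
  have key2: "\<phi> (Yinv n (n - 1) (w + 3/2)) * (\<phi> (Yv n n (w + 1)) * \<sigma> (w + 1)) =
     \<phi> (Yv n (n - 1) (w + 5/2)) * (\<phi> (Yinv n n (w + 3)) * (\<phi> (Av n n (w + 2)) * \<sigma> (w + 1)))"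
    using arg_cong[OF IB2[OF n2, of w], of \<phi>] by (intro mult3_s) (simp add: phi_mult mult.assoc)
  consider "j = 0" | "j = 1" | "j = 2" | "j = 3" | "j = 4" | "j \<ge> 5" by arith
  then show "dop_mult (Fop n n) (dop_mult (Mop n) (Fop n (n + 3))) j u \<in> Yring n \<and>
        Der (dop_mult (Fop n n) (dop_mult (Mop n) (Fop n (n + 3))) j u) = 0"
  proof cases
    case 1
    then show ?thesis unfolding B e0 using nn assms
      by (simp add: Yin Der_mult Der_Yv Der_Yinv Der_neg)
  next
    case 2
    then show ?thesis unfolding B e1a e1b using nn assms key1
      by (simp add: Yin Der_mult Der_Yv Der_Yinv Der_neg Der_add sg1)
  next
    case 3
    then show ?thesis unfolding B e2 by (simp add: Yring_zero Der_zero)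
  next
    case 4
    then show ?thesis unfolding B using nn assms key2
      by (simp add: Yin Der_mult Der_Yv Der_Yinv Der_neg Der_diff sg2)
  next
    case 5
    then show ?thesis unfolding B by (simp add: Yring.one Der_one)
  next
    case 6
    then show ?thesis unfolding B by (simp add: Yring_zero Der_zero)
  qed
qed

end

lemma upt_split: "i \<le> j \<Longrightarrow> j \<le> k \<Longrightarrow> [i..<k] = [i..<j] @ [j..<k]"
  using upt_add_eq_append[of i j "k - j"] by simp

lemma upt_two: "[j..<j + 2] = [j, j + 1]"
  by (simp add: numeral_2_eq_2)

lemma upt_four: "[j..<j + 4] = [j, j + 1, j + 2, j + 3]"
  by (simp add: numeral_eq_Suc)

context scr
begin

lemma good_low: "1 \<le> i \<Longrightarrow> i \<le> n \<Longrightarrow> i \<noteq> a \<Longrightarrow> i - 1 \<noteq> a \<Longrightarrow> good (Fop n i)"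
  unfolding Fop_def
  by (rule good_lin) (simp add: xv_zv[OF _ _ refl refl refl] Yin Der_mult Der_Yv Der_Yinv)

lemma good_high: "n + 3 \<le> i \<Longrightarrow> i \<le> 2 * n + 2 \<Longrightarrow> 2 * n + 3 - i \<noteq> a \<Longrightarrow> 2 * n + 3 - i - 1 \<noteq> a \<Longrightarrow> good (Fop n i)"
  unfolding Fop_def
  by (rule good_lin) (simp add: xv_zbar[OF _ _ refl refl refl refl] Yin Der_mult Der_Yv Der_Yinv)

lemma good_L: "good (foldr dop_mult (map (Fop n) [1..<2 * n + 3]) dop_one)"
proof (cases "a < n")
  case True
  have L: "[1..<2 * n + 3] = [1..<a] @ [a, a + 1] @ [a + 2..<n + 1] @ [n + 1, n + 2] @ [n + 3..<2 * n + 2 - a]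
      @ [2 * n + 2 - a, 2 * n + 2 - a + 1] @ [2 * n + 4 - a..<2 * n + 3]"
  proof -
    have e1: "[1..<2 * n + 3] = [1..<a] @ [a..<2 * n + 3]" using True a1 by (intro upt_split) auto
    have e2: "[a..<2 * n + 3] = [a..<a + 2] @ [a + 2..<2 * n + 3]" using True by (intro upt_split) auto
    have e3: "[a + 2..<2 * n + 3] = [a + 2..<n + 1] @ [n + 1..<2 * n + 3]" using True by (intro upt_split) auto
    have e4: "[n + 1..<2 * n + 3] = [n + 1..<n + 3] @ [n + 3..<2 * n + 3]" using True by (intro upt_split) auto
    have e4': "[n + 1..<n + 3] = [n + 1, n + 2]" by (simp add: numeral_eq_Suc)
    have e5: "[n + 3..<2 * n + 3] = [n + 3..<2 * n + 2 - a] @ [2 * n + 2 - a..<2 * n + 3]" using True by (intro upt_split) auto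
    have e6: "[2 * n + 2 - a..<2 * n + 3] = [2 * n + 2 - a..<2 * n + 4 - a] @ [2 * n + 4 - a..<2 * n + 3]"
      using True a1 by (intro upt_split) auto
    have e6': "[2 * n + 2 - a..<2 * n + 4 - a] = [2 * n + 2 - a, 2 * n + 2 - a + 1]"
    proof -
      have "2 * n + 4 - a = (2 * n + 2 - a) + 2" using True by simp
      then show ?thesis by (simp only: upt_two)
    qed
    show ?thesis unfolding e1 e2 e3 e4 e4' e5 e6 e6' upt_two by simp
  qed
  have s1: "good (foldr dop_mult (map (Fop n) [1..<a]) dop_one)"
    using True by (intro good_foldr) (auto intro!: good_low)
  have s2: "good (foldr dop_mult (map (Fop n) [a + 2..<n + 1]) dop_one)"
    using True by (intro good_foldr) (auto intro!: good_low)
  have s3: "good (foldr dop_mult (map (Fop n) [n + 3..<2 * n + 2 - a]) dop_one)"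
    using True by (intro good_foldr) (auto intro!: good_high)
  have s4: "good (foldr dop_mult (map (Fop n) [2 * n + 4 - a..<2 * n + 3]) dop_one)"
    using True a1 by (intro good_foldr) (auto intro!: good_high)
  have p1: "good (foldr dop_mult (map (Fop n) [a, a + 1]) dop_one)"
    using good_pairA[OF True] by simp
  have p2: "good (foldr dop_mult (map (Fop n) [n + 1, n + 2]) dop_one)"
    using good_mid[OF True] by simp
  have p3: "good (foldr dop_mult (map (Fop n) [2 * n + 2 - a, 2 * n + 2 - a + 1]) dop_one)"
    using good_pairZ[OF True] by simp
  show ?thesis
    unfolding L map_append
    by (intro good_append s1 s2 s3 s4 p1 p2 p3)
next
  case False
  then have an': "a = n" using an by simp
  have L: "[1..<2 * n + 3] = [1..<n] @ [n..<n + 4] @ [n + 4..<2 * n + 3]"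
  proof -
    have e1: "[1..<2 * n + 3] = [1..<n] @ [n..<2 * n + 3]" using n2 by (intro upt_split) auto
    have e2: "[n..<2 * n + 3] = [n..<n + 4] @ [n + 4..<2 * n + 3]" using n2 by (intro upt_split) auto
    show ?thesis unfolding e1 e2 ..
  qed
  show ?thesis
    unfolding L map_append upt_four
    apply (intro good_append)
    subgoal using an' by (intro good_foldr) (auto intro!: good_low)
    subgoal using good_block4[OF an'] by simp
    subgoal using an' n2 by (intro good_foldr) (auto intro!: good_high)
    done
qed

end

context scr
begin

lemma part2: "Der (Lc n j u) = 0"
  using good_L unfolding Lc_Fop good_def by blast

end

lemma telescope: "(\<Sum>j\<le>(m::nat). T j - (if j = 0 then 0 else T (j - 1))) = (T m :: 'a::ab_group_add)"
  by (induction m) (simp_all add: atMost_Suc)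

lemma part1:
  assumes "2 \<le> n"
  shows "(\<Sum>j\<le>2 * n + 2. Lc n j u * Qv 1 (u + of_nat j)) = 0"
proof -
  define M where "M = foldr dop_mult (map (Fop n) [1..<2 * n + 2]) dop_one"
  define g where "g v = xv n (2 * n + 2) (v + of_nat n + 1 - of_nat (2 * n + 2))" for v
  have LM: "Lc n = dop_mult M (dop_lin g)"
  proof -
    have "[1..<Suc (2 * n + 2)] = [1..<2 * n + 2] @ [2 * n + 2]" by (rule upt_Suc_append) simp
    then have "[1..<2 * n + 3] = [1..<2 * n + 2] @ [2 * n + 2]" by (simp only: add_Suc_right numeral_3_eq_3 numeral_2_eq_2)
    moreover have Fg: "Fop n (2 * n + 2) = dop_lin g" unfolding Fop_def g_def ..
    ultimately show ?thesis
      unfolding Lc_Fop M_def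
      by (simp only: map_append list.map foldr_dop_append foldr.simps comp_apply id_apply dop_mult_one_right Fg)
  qed
  have gq: "g v * Qv 1 v = Qv 1 (v + 1)" for v
  proof -
    have "g v = Yv n 0 (v + 1/2 - 1/2) * Yinv n 1 (v + 1/2)"
      unfolding g_def by (rule xv_zbar) (use assms in \<open>auto simp: field_simps\<close>)
    moreover have "dd n 1 = 1" using assms by (simp add: dd_def)
    ultimately show ?thesis
      apply (simp add: Yv_def Yinv_def qsimps qmono_one)
      apply (simp add: add_ac)?
      done
  qed
  have gq': "g v * Qv (Suc 0) v = Qv (Suc 0) (v + 1)" for v using gq[of v] by simp
  have Mdeg: "M j u = 0" if "j > 2 * n + 1" for j
  proof -
    have mm: "map (Fop n) [1..<2 * n + 2] = map dop_lin (map (\<lambda>i u. xv n i (u + of_nat n + 1 - of_nat i)) [1..<2 * n + 2])"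
      unfolding map_map comp_def Fop_def by (rule refl)
    show ?thesis unfolding M_def mm by (rule foldr_lin_deg) (use that in simp)
  qed
  define T where "T j = M j u * Qv 1 (u + of_nat j + 1)" for j
  have trm: "Lc n j u * Qv 1 (u + of_nat j) = T j - (if j = 0 then 0 else T (j - 1))" for j
  proof (cases j)
    case 0 then show ?thesis by (simp add: LM dop_mult_lin_right T_def gq gq' mult.assoc)
  next
    case (Suc k)
    then have "u + of_nat (j - 1) + 1 = u + of_nat j" by simp
    then show ?thesis using Suc by (simp add: LM dop_mult_lin_right T_def gq gq' mult.assoc algebra_simps)
  qed
  have "(\<Sum>j\<le>2 * n + 2. Lc n j u * Qv 1 (u + of_nat j)) = T (2 * n + 2)"
    unfolding trm by (rule telescope)
  also have "\<dots> = 0" unfolding T_def using Mdeg[of "2 * n + 2"] by simp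
  finally show ?thesis .
qed


theorem mainTheorem2:
  fixes n :: nat
  assumes "n \<ge> 2"
  shows "(\<forall>u. (\<Sum>j\<le>2 * n + 2. Lc n j u * Qv 1 (u + of_nat j)) = 0) \<and>
         (\<forall>a. 1 \<le> a \<and> a \<le> n \<longrightarrow>
            (\<forall>(\<phi> :: qring \<Rightarrow> 'r::comm_ring_1) \<sigma> Der.
               is_ring_hom \<phi> \<and> screening_symbols n a \<phi> \<sigma> \<and> screening_der n a \<phi> \<sigma> Der \<longrightarrow>
               (\<forall>j u. Der (Lc n j u) = 0)))"
proof (intro conjI allI impI)
  fix u
  show "(\<Sum>j\<le>2 * n + 2. Lc n j u * Qv 1 (u + of_nat j)) = 0" by (rule part1[OF assms])
next
  fix a and \<phi> :: "qring \<Rightarrow> 'r::comm_ring_1" and \<sigma> Der j u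
  assume a: "1 \<le> a \<and> a \<le> n"
    and h: "is_ring_hom \<phi> \<and> screening_symbols n a \<phi> \<sigma> \<and> screening_der n a \<phi> \<sigma> Der"
  interpret scr n a \<phi> \<sigma> Der
    using a h assms by unfold_locales auto
  show "Der (Lc n j u) = 0" by (rule part2)
qed

end
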